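(* Let $\mathcal R=\langle \mathbf G_o,\mathbf G_{in},\mathbf c_o,\mathbf c_{in},\mathcal P_o,\mathcal P_{in},\mathbf r,\mathbf A_o,\mathbf A_{in},\mathbf b_o,\mathbf b_{in}\rangle\subseteq\mathbb R^n$ be an RCG with $\mathbf G_o\in\mathbb R^{n\times p}$, and let $\mathcal{CG}=\langle \mathbf c_{\text{ccg}},\mathbf G_{\text{ccg}},\mathcal J_{\text{ccg}},\mathcal P_{\text{ccg}},\mathbf A_{\text{ccg}},\mathbf b_{\text{ccg}}\rangle\subseteq\mathbb R^n$ be a CCG with partition $\{\mathcal L_1,\dots,\mathcal L_{k_{\text{ccg}}}\}$ and norms $\{s_1,\dots,s_{k_{\text{ccg}}}\}$. Set $\tilde{\boldsymbol\beta}=[\boldsymbol\beta^T\ \boldsymbol\gamma^T]^T$, $\Pi_\beta=[I_p\ \ 0]$, $\tilde{\mathbf G}=[\mathbf G_o\ \ \mathbf 0]$, $$\tilde{\mathbf A}=\begin{bmatrix}\mathbf A_o&\mathbf 0\\ \mathbf 0&\mathbf A_{\text{ccg}}\\ \mathbf G_o&-\mathbf G_{\text{ccg}}\end{bmatrix},\qquad \tilde{\mathbf b}=\begin{bmatrix}\mathbf b_o\\ \mathbf b_{\text{ccg}}\\ \mathbf c_{\text{ccg}}-\mathbf c_o\end{bmatrix}.$$ Then $$\mathcal R\cap\mathcal{CG}=\Bigl\{\mathbf c_o+\tilde{\mathbf G}\tilde{\boldsymbol\beta}\ \Big|\ \|\boldsymbol\beta_{\mathcal J_i}\|_{p_i}\le1\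 (i=1,\dots,k_o),\ \|\boldsymbol\gamma_{\mathcal L_j}\|_{s_j}\le1\ (j=1,\dots,k_{\text{ccg}}),\ \tilde{\mathbf A}\tilde{\boldsymbol\beta}=\tilde{\mathbf b},$$ $$\nexists\boldsymbol\eta:\ \mathbf G_{in}\boldsymbol\eta=(\mathbf c_o-\mathbf c_{in})+\mathbf G_o\Pi_\beta\tilde{\boldsymbol\beta},\ \|\boldsymbol\eta_{\mathcal K_l}\|_{q_l}\le r_l\ (l=1,\dots,k_{in}),\ \mathbf A_{in}\boldsymbol\eta=\mathbf b_{in}\Bigr\},$$ so in particular $\mathcal R\cap\mathcal{CG}$ is again of RCG form.
   Context: A CCG $\langle \mathbf c,\mathbf G,\mathcal J,\mathcal P,\mathbf A,\mathbf b\rangle$ with $\mathbf G\in\mathbb R^{n\times m}$, $\mathcal J=\{\mathcal J_1,\dots,\mathcal J_k\}$ a partition of $\{1,\dots,m\}$, $\mathcal P=\{p_1,\dots,p_k\}\subset[1,\infty]$, is the set $\{\mathbf c+\mathbf G\boldsymbol\beta:\|\boldsymbol\beta_{\mathcal J_i}\|_{p_i}\le1\ \forall i,\ \mathbf A\boldsymbol\beta=\mathbf b\}$ ($\boldsymbol\beta_{\mathcal J}$ the subvector indexed by $\mathcal J$). An RCG $\langle \mathbf G_o,\mathbf G_{in},\mathbf c_o,\mathbf c_{in},\mathcal P_o,\mathcal P_{in},\mathbf r,\mathbf A_o,\mathbf A_{in},\mathbf b_o,\mathbf b_{in}\rangle$ is the set $\mathcal{CG}_{\text{outer}}\setminus\mathcal{CG}_{\text{inner}}$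 with $\mathcal{CG}_{\text{outer}}=\{\mathbf c_o+\mathbf G_o\boldsymbol\beta:\|\boldsymbol\beta_{\mathcal J_i}\|_{p_i}\le1\ (i=1,\dots,k_o),\ \mathbf A_o\boldsymbol\beta=\mathbf b_o\}$ and $\mathcal{CG}_{\text{inner}}=\{\mathbf c_{in}+\mathbf G_{in}\boldsymbol\eta:\|\boldsymbol\eta_{\mathcal K_j}\|_{q_j}\le r_j\ (j=1,\dots,k_{in}),\ \mathbf A_{in}\boldsymbol\eta=\mathbf b_{in}\}$, where $\{\mathcal J_i\}$, $\{\mathcal K_j\}$ are partitions of the respective generator index sets, $\mathcal P_o=\{p_i\}$, $\mathcal P_{in}=\{q_j\}\subset[1,\infty]$, and $\mathbf r=(r_j)$ with $r_j\in[0,1)$. *)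

theory Defs
  imports "HOL-Analysis.Analysis"
begin

text \<open>Vectors in R^n are rendered as real^'n with finite index types; an
n x m matrix is real^'m^'n.\<close>

definition is_partition :: "('k \<Rightarrow> 'm set) \<Rightarrow> bool" where
  "is_partition J \<longleftrightarrow> (\<forall>i. J i \<noteq> {}) \<and> (\<forall>i j. i \<noteq> j \<longrightarrow> J i \<inter> J j = {})
     \<and> (\<Union>i. J i) = UNIV"

definition blocknorm :: "ereal \<Rightarrow> 'm::finite set \<Rightarrow> real^'m \<Rightarrow> real" where
  "blocknorm p J x =
     (if p = \<infinity> then (if J = {} then 0 else Max ((\<lambda>j. \<bar>x $ j\<bar>) ` J))
      else (\<Sum>j\<in>J. \<bar>x $ j\<bar> powr real_of_ereal p) powr (1 / real_of_ereal p))"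

definition cg_radii ::
  "real^'n \<Rightarrow> real^'m::finite^'n::finite \<Rightarrow> ('k \<Rightarrow> 'm set) \<Rightarrow> ('k \<Rightarrow> ereal)
   \<Rightarrow> ('k \<Rightarrow> real) \<Rightarrow> real^'m^'a::finite \<Rightarrow> real^'a \<Rightarrow> (real^'n) set" where
  "cg_radii c G J P r A b =
     {c + G *v \<beta> | \<beta>. (\<forall>i. blocknorm (P i) (J i) \<beta> \<le> r i) \<and> A *v \<beta> = b}"

definition ccg_set ::
  "real^'n \<Rightarrow> real^'m::finite^'n::finite \<Rightarrow> ('k \<Rightarrow> 'm set) \<Rightarrow> ('k \<Rightarrow> ereal)
   \<Rightarrow> real^'m^'a::finite \<Rightarrow> real^'a \<Rightarrow> (real^'n) set" where
  "ccg_set c G J P A b = cg_radii c G J P (\<lambda>_. 1) A b"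

definition rcg_set ::
  "real^'p::finite^'n::finite \<Rightarrow> real^'q::finite^'n \<Rightarrow> real^'n \<Rightarrow> real^'n
   \<Rightarrow> ('ko \<Rightarrow> 'p set) \<Rightarrow> ('ko \<Rightarrow> ereal) \<Rightarrow> ('ki \<Rightarrow> 'q set) \<Rightarrow> ('ki \<Rightarrow> ereal)
   \<Rightarrow> ('ki \<Rightarrow> real) \<Rightarrow> real^'p^'a::finite \<Rightarrow> real^'q^'c::finite \<Rightarrow> real^'a \<Rightarrow> real^'c
   \<Rightarrow> (real^'n) set" where
  "rcg_set Go Gin co cin Jo Po Kin Qin r Ao Ain bo bin =
     ccg_set co Go Jo Po Ao bo - cg_radii cin Gin Kin Qin r Ain bin"

definition Pi_beta :: "real^('p::finite + 'm::finite)^'p" where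
  "Pi_beta = (\<chi> i j. if j = Inl i then 1 else 0)"

definition Pi_gamma :: "real^('p::finite + 'm::finite)^'m" where
  "Pi_gamma = (\<chi> i j. if j = Inr i then 1 else 0)"

definition G_tilde :: "real^'p::finite^'n::finite \<Rightarrow> real^('p + 'm::finite)^'n" where
  "G_tilde Go = (\<chi> i j. case j of Inl k \<Rightarrow> Go $ i $ k | Inr _ \<Rightarrow> 0)"

definition A_tilde ::
  "real^'p::finite^'a::finite \<Rightarrow> real^'m::finite^'e::finite \<Rightarrow> real^'p^'n::finite
   \<Rightarrow> real^'m^'n \<Rightarrow> real^('p + 'm)^('a + ('e + 'n))" where
  "A_tilde Ao Accg Go Gccg = (\<chi> i j.
     case i of
       Inl r \<Rightarrow> (case j of Inl k \<Rightarrow> Ao $ r $ k | Inr _ \<Rightarrow> 0)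
     | Inr (Inl r) \<Rightarrow> (case j of Inl _ \<Rightarrow> 0 | Inr k \<Rightarrow> Accg $ r $ k)
     | Inr (Inr r) \<Rightarrow> (case j of Inl k \<Rightarrow> Go $ r $ k | Inr k \<Rightarrow> - (Gccg $ r $ k)))"

definition b_tilde ::
  "real^'a::finite \<Rightarrow> real^'e::finite \<Rightarrow> real^'n::finite \<Rightarrow> real^'n \<Rightarrow> real^('a + ('e + 'n))" where
  "b_tilde bo bccg cccg co = (\<chi> i.
     case i of Inl r \<Rightarrow> bo $ r | Inr (Inl r) \<Rightarrow> bccg $ r | Inr (Inr r) \<Rightarrow> (cccg - co) $ r)"

definition J_tilde :: "('ko \<Rightarrow> 'p set) \<Rightarrow> ('kc \<Rightarrow> 'm set) \<Rightarrow> ('ko + 'kc) \<Rightarrow> ('p + 'm) set" where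
  "J_tilde J L i = (case i of Inl a \<Rightarrow> Inl ` J a | Inr c \<Rightarrow> Inr ` L c)"

definition P_tilde :: "('ko \<Rightarrow> ereal) \<Rightarrow> ('kc \<Rightarrow> ereal) \<Rightarrow> ('ko + 'kc) \<Rightarrow> ereal" where
  "P_tilde P S i = (case i of Inl a \<Rightarrow> P a | Inr c \<Rightarrow> S c)"

end

theory Submission
  imports Defs
begin

lemma sumP: "(\<Sum>j\<in>(UNIV::('a::finite+'b::finite) set). f j) = (\<Sum>j\<in>UNIV. f (Inl j)) + (\<Sum>j\<in>UNIV. f (Inr j))"
proof -
  have "(\<Sum>j\<in>(UNIV::('a+'b) set). f j) = (\<Sum>j\<in>(UNIV <+> UNIV). f j)"
    by (simp only: UNIV_Plus_UNIV)
  also have "\<dots> = (\<Sum>j\<in>UNIV. f (Inl j)) + (\<Sum>j\<in>UNIV. f (Inr j))"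
    by (subst sum.Plus) (simp_all add: comp_def)
  finally show ?thesis .
qed

lemma delta1: "(\<Sum>j\<in>(UNIV::'a::finite set). (if j = i then 1 else 0) * (f j::real)) = f i"
proof -
  have "(\<Sum>j\<in>(UNIV::'a set). (if j = i then 1 else 0) * f j) = (\<Sum>j\<in>(UNIV::'a set). if j = i then f j else 0)"
    by (rule sum.cong) auto
  then show ?thesis by simp
qed

lemma PiB: "(Pi_beta :: real^('p::finite + 'm::finite)^'p) *v bt = (\<chi> i. bt $ Inl i)"
  by (simp add: vec_eq_iff matrix_vector_mult_def Pi_beta_def sumP delta1)
lemma PiG: "(Pi_gamma :: real^('p::finite + 'm::finite)^'m) *v bt = (\<chi> i. bt $ Inr i)"
  by (simp add: vec_eq_iff matrix_vector_mult_def Pi_gamma_def sumP delta1)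
lemma Gt: "(G_tilde Go :: real^('p::finite + 'm::finite)^'n::finite) *v bt = Go *v (\<chi> i. bt $ Inl i)"
  by (simp add: vec_eq_iff matrix_vector_mult_def G_tilde_def sumP)
lemma At1: "(A_tilde Ao Accg Go Gccg *v bt) $ Inl r = (Ao *v (\<chi> i. bt $ Inl i)) $ r"
  by (simp add: matrix_vector_mult_def A_tilde_def sumP)
lemma At2: "(A_tilde Ao Accg Go Gccg *v bt) $ Inr (Inl r) = (Accg *v (\<chi> i. bt $ Inr i)) $ r"
  by (simp add: matrix_vector_mult_def A_tilde_def sumP)
lemma At3: "(A_tilde Ao Accg Go Gccg *v bt) $ Inr (Inr r) = (Go *v (\<chi> i. bt $ Inl i) - Gccg *v (\<chi> i. bt $ Inr i)) $ r"
  by (simp add: matrix_vector_mult_def A_tilde_def sumP sum_negf sum_subtractf)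
lemma At: "(A_tilde Ao Accg Go Gccg *v bt = b_tilde bo bccg cccg co) \<longleftrightarrow>
   Ao *v (\<chi> i. bt $ Inl i) = bo \<and> Accg *v (\<chi> i. bt $ Inr i) = bccg \<and>
   Go *v (\<chi> i. bt $ Inl i) - Gccg *v (\<chi> i. bt $ Inr i) = cccg - co"
  unfolding vec_eq_iff split_sum_all At1 At2 At3 by (simp add: b_tilde_def)
lemma bnL: "blocknorm p (Inl ` J) bt = blocknorm p J (\<chi> i. bt $ Inl i)"
  by (simp add: blocknorm_def sum.reindex image_image)
lemma bnR: "blocknorm p (Inr ` J) bt = blocknorm p J (\<chi> i. bt $ Inr i)"
  by (simp add: blocknorm_def sum.reindex image_image)

lemma bnT: "(\<forall>i. blocknorm (P_tilde Po S i) (J_tilde Jo L i) bt \<le> 1) \<longleftrightarrow>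
  (\<forall>a. blocknorm (Po a) (Jo a) (\<chi> i. bt $ Inl i) \<le> 1) \<and> (\<forall>c. blocknorm (S c) (L c) (\<chi> i. bt $ Inr i) \<le> 1)"
  unfolding split_sum_all by (simp add: P_tilde_def J_tilde_def bnL bnR)

lemma Ct: "ccg_set co (G_tilde Go :: real^('p::finite + 'm::finite)^'n::finite) (J_tilde Jo L) (P_tilde Po S)
     (A_tilde Ao Accg Go Gccg) (b_tilde bo bccg cccg co) =
  {co + Go *v (\<chi> i. bt $ Inl i) | bt :: real^('p + 'm).
     (\<forall>a. blocknorm (Po a) (Jo a) (\<chi> i. bt $ Inl i) \<le> 1) \<and> (\<forall>c. blocknorm (S c) (L c) (\<chi> i. bt $ Inr i) \<le> 1)
   \<and> Ao *v (\<chi> i. bt $ Inl i) = bo \<and> Accg *v (\<chi> i. bt $ Inr i) = bccg \<and>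
   Go *v (\<chi> i. bt $ Inl i) - Gccg *v (\<chi> i. bt $ Inr i) = cccg - co}"
  unfolding ccg_set_def cg_radii_def bnT At Gt by simp

lemma K: "ccg_set co Go Jo Po Ao bo \<inter> ccg_set cccg Gccg L S Accg bccg =
  ccg_set co (G_tilde Go :: real^('p::finite + 'm::finite)^'n::finite) (J_tilde Jo L) (P_tilde Po S)
     (A_tilde Ao Accg Go Gccg) (b_tilde bo bccg cccg co)"
  unfolding Ct
proof (intro equalityI subsetI)
  fix x assume "x \<in> ccg_set co Go Jo Po Ao bo \<inter> ccg_set cccg Gccg L S Accg bccg"
  then obtain \<beta> \<gamma> where x1: "x = co + Go *v \<beta>" "\<forall>i. blocknorm (Po i) (Jo i) \<beta> \<le> 1" "Ao *v \<beta> = bo"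
     and x2: "x = cccg + Gccg *v \<gamma>" "\<forall>i. blocknorm (S i) (L i) \<gamma> \<le> 1" "Accg *v \<gamma> = bccg"
    unfolding ccg_set_def cg_radii_def by blast
  define bt :: "real^('p + 'm)" where "bt = (\<chi> j. case j of Inl i \<Rightarrow> \<beta> $ i | Inr i \<Rightarrow> \<gamma> $ i)"
  have b: "(\<chi> i. bt $ Inl i) = \<beta>" "(\<chi> i. bt $ Inr i) = \<gamma>"
    by (simp_all add: bt_def vec_eq_iff)
  have "Go *v \<beta> - Gccg *v \<gamma> = cccg - co" using x1(1) x2(1) by (simp add: algebra_simps)
  then show "x \<in> {co + Go *v (\<chi> i. bt $ Inl i) | bt :: real^('p + 'm).
     (\<forall>a. blocknorm (Po a) (Jo a) (\<chi> i. bt $ Inl i) \<le> 1) \<and> (\<forall>c. blocknorm (S c) (L c) (\<chi> i. bt $ Inr i) \<le> 1)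
   \<and> Ao *v (\<chi> i. bt $ Inl i) = bo \<and> Accg *v (\<chi> i. bt $ Inr i) = bccg \<and>
   Go *v (\<chi> i. bt $ Inl i) - Gccg *v (\<chi> i. bt $ Inr i) = cccg - co}"
    using x1 x2 b by (intro CollectI exI[of _ bt]) simp
next
  fix x assume "x \<in> {co + Go *v (\<chi> i. bt $ Inl i) | bt :: real^('p + 'm).
     (\<forall>a. blocknorm (Po a) (Jo a) (\<chi> i. bt $ Inl i) \<le> 1) \<and> (\<forall>c. blocknorm (S c) (L c) (\<chi> i. bt $ Inr i) \<le> 1)
   \<and> Ao *v (\<chi> i. bt $ Inl i) = bo \<and> Accg *v (\<chi> i. bt $ Inr i) = bccg \<and>
   Go *v (\<chi> i. bt $ Inl i) - Gccg *v (\<chi> i. bt $ Inr i) = cccg - co}"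
  then obtain bt :: "real^('p + 'm)" where h: "x = co + Go *v (\<chi> i. bt $ Inl i)"
     "(\<forall>a. blocknorm (Po a) (Jo a) (\<chi> i. bt $ Inl i) \<le> 1)" "(\<forall>c. blocknorm (S c) (L c) (\<chi> i. bt $ Inr i) \<le> 1)"
     "Ao *v (\<chi> i. bt $ Inl i) = bo" "Accg *v (\<chi> i. bt $ Inr i) = bccg"
     "Go *v (\<chi> i. bt $ Inl i) - Gccg *v (\<chi> i. bt $ Inr i) = cccg - co" by blast
  have "x = cccg + Gccg *v (\<chi> i. bt $ Inr i)" using h(1) h(6) by (simp add: algebra_simps)
  then show "x \<in> ccg_set co Go Jo Po Ao bo \<inter> ccg_set cccg Gccg L S Accg bccg"
    unfolding ccg_set_def cg_radii_def using h by blast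
qed

lemma eqlem: fixes a v c w :: "'a::ab_group_add"
  shows "(a + v = c + w) \<longleftrightarrow> (w = a - c + v)"
proof
  assume "a + v = c + w"
  then have "w = (a + v) - c" by (simp add: algebra_simps)
  then show "w = a - c + v" by (simp add: algebra_simps)
next
  assume "w = a - c + v"
  then show "a + v = c + w" by (simp add: algebra_simps)
qed

lemma diff_int: "(A - B) \<inter> C = (A \<inter> C) - B" by blast

theorem proposition5:
  fixes Go :: "real^'p::finite^'n::finite" and Gin :: "real^'q::finite^'n"
    and co cin :: "real^'n"
    and Jo :: "'ko::finite \<Rightarrow> 'p set" and Po :: "'ko \<Rightarrow> ereal"
    and Kin :: "'ki::finite \<Rightarrow> 'q set" and Qin :: "'ki \<Rightarrow> ereal" and r :: "'ki \<Rightarrow> real"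
    and Ao :: "real^'p^'a::finite" and bo :: "real^'a"
    and Ain :: "real^'q^'c::finite" and bin :: "real^'c"
    and cccg :: "real^'n" and Gccg :: "real^'m::finite^'n"
    and L :: "'kc::finite \<Rightarrow> 'm set" and S :: "'kc \<Rightarrow> ereal"
    and Accg :: "real^'m^'e::finite" and bccg :: "real^'e"
  assumes "is_partition Jo" and "\<forall>i. 1 \<le> Po i"
    and "is_partition Kin" and "\<forall>l. 1 \<le> Qin l"
    and "\<forall>l. 0 \<le> r l \<and> r l < 1"
    and "is_partition L" and "\<forall>j. 1 \<le> S j"
  shows "rcg_set Go Gin co cin Jo Po Kin Qin r Ao Ain bo bin \<inter> ccg_set cccg Gccg L S Accg bccg
       = {co + (G_tilde Go :: real^('p + 'm)^'n) *v bt | bt.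
            (\<forall>i. blocknorm (Po i) (Jo i) (Pi_beta *v bt) \<le> 1)
          \<and> (\<forall>j. blocknorm (S j) (L j) (Pi_gamma *v bt) \<le> 1)
          \<and> A_tilde Ao Accg Go Gccg *v bt = b_tilde bo bccg cccg co
          \<and> \<not> (\<exists>\<eta>. Gin *v \<eta> = (co - cin) + Go *v (Pi_beta *v bt)
                  \<and> (\<forall>l. blocknorm (Qin l) (Kin l) \<eta> \<le> r l) \<and> Ain *v \<eta> = bin)}
     \<and> rcg_set Go Gin co cin Jo Po Kin Qin r Ao Ain bo bin \<inter> ccg_set cccg Gccg L S Accg bccg
       = rcg_set (G_tilde Go :: real^('p + 'm)^'n) Gin co cin (J_tilde Jo L) (P_tilde Po S)
           Kin Qin r (A_tilde Ao Accg Go Gccg) Ain (b_tilde bo bccg cccg co) bin"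
proof -
  let ?I = "cg_radii cin Gin Kin Qin r Ain bin"
  have E2: "rcg_set Go Gin co cin Jo Po Kin Qin r Ao Ain bo bin \<inter> ccg_set cccg Gccg L S Accg bccg
       = rcg_set (G_tilde Go :: real^('p + 'm)^'n) Gin co cin (J_tilde Jo L) (P_tilde Po S)
           Kin Qin r (A_tilde Ao Accg Go Gccg) Ain (b_tilde bo bccg cccg co) bin"
    unfolding rcg_set_def diff_int K by (rule refl)
  have memI: "\<And>bt :: real^('p + 'm). (co + Go *v (\<chi> i. bt $ Inl i) \<in> ?I) \<longleftrightarrow>
     (\<exists>\<eta>. Gin *v \<eta> = (co - cin) + Go *v (\<chi> i. bt $ Inl i)
                  \<and> (\<forall>l. blocknorm (Qin l) (Kin l) \<eta> \<le> r l) \<and> Ain *v \<eta> = bin)"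
    unfolding cg_radii_def mem_Collect_eq eqlem by (rule refl)
  have E1: "rcg_set (G_tilde Go :: real^('p + 'm)^'n) Gin co cin (J_tilde Jo L) (P_tilde Po S)
           Kin Qin r (A_tilde Ao Accg Go Gccg) Ain (b_tilde bo bccg cccg co) bin
       = {co + (G_tilde Go :: real^('p + 'm)^'n) *v bt | bt.
            (\<forall>i. blocknorm (Po i) (Jo i) (Pi_beta *v bt) \<le> 1)
          \<and> (\<forall>j. blocknorm (S j) (L j) (Pi_gamma *v bt) \<le> 1)
          \<and> A_tilde Ao Accg Go Gccg *v bt = b_tilde bo bccg cccg co
          \<and> \<not> (\<exists>\<eta>. Gin *v \<eta> = (co - cin) + Go *v (Pi_beta *v bt)
                  \<and> (\<forall>l. blocknorm (Qin l) (Kin l) \<eta> \<le> r l) \<and> Ain *v \<eta> = bin)}"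
    unfolding rcg_set_def Ct PiB PiG Gt At using memI by blast
  show ?thesis by (simp only: E2 E1)
qed

end
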